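(* Let $N=\{1,\dots,n\}$ with $n\ge 2$ and $\mathcal{D}=\mathbb{R}^n_+$. A rule $R:\mathcal{D}\to\mathbb{R}^n_+$ satisfies scale invariance, downstream impartiality, and upstream invariance if and only if there exists $\alpha=(\alpha_1,\dots,\alpha_{n-1})\in[0,1]^{n-1}$ such that for each $e\in\mathcal{D}$, $$R_i(e)=\alpha_i e_i+\sum_{k<i}\frac{(1-\alpha_k)e_k}{n-k}\quad (i=1,\dots,n-1),\qquad R_n(e)=e_n+\sum_{k<n}\frac{(1-\alpha_k)e_k}{n-k}.$$
   Context: Agents $1,\dots,n$ are located along a linear river, lower index meaning more upstream; agent $i$ has river inflow $e_i\ge 0$, and $e=(e_1,\dots,e_n)\in\mathcal{D}=\mathbb{R}^n_+$. An allocation for $e$ is $x\in\mathbb{R}^n_+$ with $\sum_{i=1}^n x_i=\sum_{i=1}^n e_i$ and $\sum_{i=1}^k x_i\le\sum_{i=1}^k e_i$ for each $k=1,\dots,n-1$. A rule is a map $R:\mathcal{D}\to\mathbb{R}^n_+$ assigning to each $e$ an allocation $R(e)$ for $e$. Axioms: Scale invariance: for each $e\in\mathcal{D}$ and each $\gamma\in\mathbb{R}_+$, $R(\gamma e)=\gamma R(e)$. Upstream invariance: for each $e,e'\in\mathcal{D}$ such that $e_i<e'_i$ for some $i\in N$ and $e_j=e'_j$ for all $j\ne i$, we have $R_k(e)=R_k(e')$ for each $k<i$. Downstream impartiality: for each $e,e'\in\mathcal{D}$ such that $e_i<e'_i$ for some $i\in N$ and $e_j=e'_j$ for all $j\ne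 i$, and for each $k,l>i$ with $e_k=e_l$, we have $R_k(e')-R_k(e)=R_l(e')-R_l(e)$. *)

theory Defs
  imports Complex_Main
begin

text \<open>Agents are 1..n. A profile in R^n_+ is modelled as a function nat => real that is
  nonnegative on {1..n} and zero outside {1..n}.\<close>

definition dom_D :: "nat \<Rightarrow> (nat \<Rightarrow> real) set" where
  "dom_D n = {e. (\<forall>i\<in>{1..n}. 0 \<le> e i) \<and> (\<forall>i. i \<notin> {1..n} \<longrightarrow> e i = 0)}"

definition is_allocation :: "nat \<Rightarrow> (nat \<Rightarrow> real) \<Rightarrow> (nat \<Rightarrow> real) \<Rightarrow> bool" where
  "is_allocation n e x \<longleftrightarrow>
     (\<forall>i\<in>{1..n}. 0 \<le> x i) \<and>
     (\<Sum>i=1..n. x i) = (\<Sum>i=1..n. e i) \<and>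
     (\<forall>k\<in>{1..n-1}. (\<Sum>i=1..k. x i) \<le> (\<Sum>i=1..k. e i))"

definition is_rule :: "nat \<Rightarrow> ((nat \<Rightarrow> real) \<Rightarrow> (nat \<Rightarrow> real)) \<Rightarrow> bool" where
  "is_rule n R \<longleftrightarrow> (\<forall>e\<in>dom_D n. is_allocation n e (R e))"

definition scale_invariance :: "nat \<Rightarrow> ((nat \<Rightarrow> real) \<Rightarrow> (nat \<Rightarrow> real)) \<Rightarrow> bool" where
  "scale_invariance n R \<longleftrightarrow>
     (\<forall>e\<in>dom_D n. \<forall>\<gamma>::real. 0 \<le> \<gamma> \<longrightarrow>
        (\<forall>i\<in>{1..n}. R (\<lambda>j. \<gamma> * e j) i = \<gamma> * R e i))"

definition upstream_invariance :: "nat \<Rightarrow> ((nat \<Rightarrow> real) \<Rightarrow> (nat \<Rightarrow> real)) \<Rightarrow> bool" where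
  "upstream_invariance n R \<longleftrightarrow>
     (\<forall>e\<in>dom_D n. \<forall>e'\<in>dom_D n. \<forall>i\<in>{1..n}.
        e i < e' i \<and> (\<forall>j\<in>{1..n}. j \<noteq> i \<longrightarrow> e j = e' j) \<longrightarrow>
        (\<forall>k\<in>{1..n}. k < i \<longrightarrow> R e k = R e' k))"

definition downstream_impartiality :: "nat \<Rightarrow> ((nat \<Rightarrow> real) \<Rightarrow> (nat \<Rightarrow> real)) \<Rightarrow> bool" where
  "downstream_impartiality n R \<longleftrightarrow>
     (\<forall>e\<in>dom_D n. \<forall>e'\<in>dom_D n. \<forall>i\<in>{1..n}.
        e i < e' i \<and> (\<forall>j\<in>{1..n}. j \<noteq> i \<longrightarrow> e j = e' j) \<longrightarrow>
        (\<forall>k\<in>{1..n}. \<forall>l\<in>{1..n}. i < k \<and> i < l \<and> e k = e l \<longrightarrow>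
           R e' k - R e k = R e' l - R e l))"

end

theory Submission
  imports Defs
begin

lemma alg:
  fixes n i :: nat and a e :: "nat \<Rightarrow> real"
  assumes "i \<le> n"
  shows "(\<Sum>k\<in>{1..<i}. e k) - (\<Sum>l\<in>{1..<i}. a l * e l + (\<Sum>k\<in>{1..<l}. (1 - a k) * e k / (real n - real k)))
     = (real n + 1 - real i) * (\<Sum>k\<in>{1..<i}. (1 - a k) * e k / (real n - real k))"
  using assms
proof (induction i)
  case 0
  then show ?case by simp
next
  case (Suc i)
  show ?case
  proof (cases "i = 0")
    case True
    then show ?thesis by simp
  next
    case False
    have ins: "{1..<Suc i} = insert i {1..<i}" using False by auto
    have ne: "real n - real i \<noteq> 0" using Suc.prems by simp
    have key: "(real n - real i) * ((1 - a i) * e i / (real n - real i)) = (1 - a i) * e i"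
      using ne by simp
    have IH: "(\<Sum>k\<in>{1..<i}. e k) - (\<Sum>l\<in>{1..<i}. a l * e l + (\<Sum>k\<in>{1..<l}. (1 - a k) * e k / (real n - real k)))
     = (real n + 1 - real i) * (\<Sum>k\<in>{1..<i}. (1 - a k) * e k / (real n - real k))"
      using Suc by simp
    show ?thesis unfolding ins using IH key
      by (simp add: algebra_simps)
  qed
qed

lemma split_sum:
  fixes f :: "nat \<Rightarrow> real"
  assumes "1 \<le> i" "i \<le> n"
  shows "(\<Sum>l\<in>{1..n}. f l) = (\<Sum>l\<in>{1..<i}. f l) + (\<Sum>l\<in>{i..n}. f l)"
proof -
  have "{1..n} = {1..<i} \<union> {i..n}" using assms by auto
  moreover have "{1..<i} \<inter> {i..n} = {}" by auto
  ultimately show ?thesis by (simp add: sum.union_disjoint)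
qed

locale fw =
  fixes n :: nat and R :: "(nat \<Rightarrow> real) \<Rightarrow> nat \<Rightarrow> real"
  assumes n2: "2 \<le> n" and rule: "is_rule n R" and si: "scale_invariance n R"
    and di: "downstream_impartiality n R" and ui: "upstream_invariance n R"
begin

lemma alloc: "e \<in> dom_D n \<Longrightarrow> is_allocation n e (R e)"
  using rule unfolding is_rule_def by auto

lemma D_out: "e \<in> dom_D n \<Longrightarrow> j \<notin> {1..n} \<Longrightarrow> e j = 0"
  unfolding dom_D_def by auto

lemma same: "e \<in> dom_D n \<Longrightarrow> e' \<in> dom_D n \<Longrightarrow> \<forall>j\<in>{1..n}. e j = e' j \<Longrightarrow> e = e'"
  by (rule ext) (metis D_out)

lemma UI1:
  assumes "e \<in> dom_D n" "e' \<in> dom_D n" "i \<in> {1..n}" "\<forall>j\<in>{1..n}. j \<noteq> i \<longrightarrow> e j = e' j"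
    "k \<in> {1..n}" "k < i"
  shows "R e k = R e' k"
proof (cases "e i < e' i")
  case True
  then show ?thesis using ui assms unfolding upstream_invariance_def by blast
next
  case False
  show ?thesis
  proof (cases "e' i < e i")
    case True
    have "\<forall>j\<in>{1..n}. j \<noteq> i \<longrightarrow> e' j = e j" using assms(4) by auto
    then have "R e' k = R e k" using True ui assms unfolding upstream_invariance_def by blast
    then show ?thesis by simp
  next
    case False2: False
    have "e = e'" using same[OF assms(1,2)] assms(4) False False2 by force
    then show ?thesis by simp
  qed
qed

lemma DI1:
  assumes "e \<in> dom_D n" "e' \<in> dom_D n" "i \<in> {1..n}" "\<forall>j\<in>{1..n}. j \<noteq> i \<longrightarrow> e j = e' j"
    "k \<in> {1..n}" "l \<in> {1..n}" "i < k" "i < l" "e k = e l"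
  shows "R e' k - R e k = R e' l - R e l"
proof (cases "e i < e' i")
  case True
  then show ?thesis using di assms unfolding downstream_impartiality_def by blast
next
  case False
  show ?thesis
  proof (cases "e' i < e i")
    case True
    have h: "\<forall>j\<in>{1..n}. j \<noteq> i \<longrightarrow> e' j = e j" using assms(4) by auto
    have "e' k = e' l" using assms by force
    then have "R e k - R e' k = R e l - R e' l" using h True di assms unfolding downstream_impartiality_def by blast
    then show ?thesis by simp
  next
    case False2: False
    have "e = e'" using same[OF assms(1,2)] assms(4) False False2 by force
    then show ?thesis by simp
  qed
qed

lemma UIgen:
  assumes "e \<in> dom_D n" "e' \<in> dom_D n" "k \<in> {1..n}" "\<forall>j\<in>{1..k}. e j = e' j"
  shows "R e k = R e' k"
proof -
  define g where "g m = (\<lambda>j. if j \<le> k + m then e j else e' j)" for m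
  have gD: "g m \<in> dom_D n" for m
    using assms(1,2) unfolding g_def dom_D_def by auto
  have "R (g m) k = R e' k" for m
  proof (induction m)
    case 0
    have "g 0 = e'"
    proof
      fix j show "g 0 j = e' j"
        using assms D_out[OF assms(1), of 0] D_out[OF assms(2), of 0] unfolding g_def
        by (cases "j = 0") auto
    qed
    then show ?case by simp
  next
    case (Suc m)
    show ?case
    proof (cases "Suc (k + m) \<le> n")
      case True
      have "R (g (Suc m)) k = R (g m) k"
        by (rule UI1[of "g (Suc m)" "g m" "Suc (k + m)", OF gD gD]) (use True assms(3) in \<open>auto simp: g_def\<close>)
      then show ?thesis using Suc by simp
    next
      case False
      have "g (Suc m) = g m"
      proof
        fix j show "g (Suc m) j = g m j"
          using False D_out[OF assms(1), of j] D_out[OF assms(2), of j] unfolding g_def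
          by (cases "j = Suc (k + m)") auto
      qed
      then show ?thesis using Suc by simp
    qed
  qed
  moreover have "g n = e"
  proof
    fix j show "g n j = e j"
      using D_out[OF assms(1), of j] D_out[OF assms(2), of j] unfolding g_def by auto
  qed
  ultimately show ?thesis by metis
qed

lemma DIchain:
  assumes "e \<in> dom_D n" "e' \<in> dom_D n" "i \<in> {1..n}" "\<forall>j\<in>{i..n}. e j = e i \<and> e' j = e i"
    "l \<in> {i..n}"
  shows "R e' l - R e l = R e' i - R e i"
proof -
  define g where "g m = (\<lambda>j. if j \<le> m then e' j else e j)" for m
  have gD: "g m \<in> dom_D n" for m
    using assms(1,2) unfolding g_def dom_D_def by auto
  have i1: "1 \<le> i" "i \<le> n" "l \<le> n" "i \<le> l" using assms(3,5) by auto
  have "m < i \<Longrightarrow> R (g m) l - R e l = R (g m) i - R e i" for m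
  proof (induction m)
    case 0
    have "g 0 = e"
    proof
      fix j show "g 0 j = e j"
        using D_out[OF assms(1), of 0] D_out[OF assms(2), of 0] unfolding g_def
        by (cases "j = 0") auto
    qed
    then show ?case by simp
  next
    case (Suc m)
    have h1: "Suc m \<in> {1..n}" using Suc.prems i1 by simp
    have h2: "\<forall>j\<in>{1..n}. j \<noteq> Suc m \<longrightarrow> g m j = g (Suc m) j" unfolding g_def by simp
    have h3: "l \<in> {1..n}" "i \<in> {1..n}" using i1 by auto
    have h4: "Suc m < l" "Suc m < i" using Suc.prems i1 by auto
    have el: "e l = e i" using assms(4,5) by blast
    have h5: "g m l = g m i" using h4 el unfolding g_def by simp
    have "R (g (Suc m)) l - R (g m) l = R (g (Suc m)) i - R (g m) i"
      by (rule DI1[OF gD gD h1 h2 h3 h4 h5])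
    moreover have "R (g m) l - R e l = R (g m) i - R e i" using Suc by simp
    ultimately show ?case by simp
  qed
  moreover have "g (i - 1) = e'"
  proof
    fix j
    show "g (i - 1) j = e' j"
    proof (cases "j \<le> i - 1")
      case True then show ?thesis unfolding g_def by simp
    next
      case False
      show ?thesis
      proof (cases "j \<le> n")
        case True
        then have "j \<in> {i..n}" using False by auto
        then have "e j = e' j" using assms(4) by metis
        then show ?thesis using False unfolding g_def by simp
      next
        case False2: False
        then show ?thesis using False D_out[OF assms(1), of j] D_out[OF assms(2), of j] unfolding g_def by simp
      qed
    qed
  qed
  moreover have "i - 1 < i" using i1 by simp
  ultimately show ?thesis by metis
qed

definition u :: "nat \<Rightarrow> nat \<Rightarrow> real" where "u k = (\<lambda>j. if j = k then 1 else 0)"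
definition al :: "nat \<Rightarrow> real" where "al k = R (u k) k"

lemma uD: "k \<in> {1..n} \<Longrightarrow> u k \<in> dom_D n"
  unfolding u_def dom_D_def by auto

lemma zD: "(\<lambda>_. 0::real) \<in> dom_D n"
  unfolding dom_D_def by auto

lemma zero: assumes "l \<in> {1..n}" shows "R (\<lambda>_. 0) l = 0"
proof -
  have a: "is_allocation n (\<lambda>_. 0) (R (\<lambda>_. 0))" using alloc zD by blast
  then have "(\<Sum>i=1..n. R (\<lambda>_. 0) i) = 0" "\<forall>i\<in>{1..n}. 0 \<le> R (\<lambda>_. 0) i"
    unfolding is_allocation_def by auto
  then show ?thesis using assms sum_nonneg_eq_0_iff[of "{1..n}" "R (\<lambda>_. 0)"] by auto
qed

lemma scale: assumes "k \<in> {1..n}" "0 \<le> t" shows "R (\<lambda>j. t * u k j) k = t * al k"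
  using si assms uD unfolding scale_invariance_def al_def by blast

lemma M:
  assumes "i \<in> {1..n}" "e \<in> dom_D n"
  shows "R e i = al i * e i + (\<Sum>k\<in>{1..<i}. (1 - al k) * e k / (real n - real k))"
  using assms
proof (induction i arbitrary: e rule: less_induct)
  case (less i)
  define S where "S l f = (\<Sum>k\<in>{1..<l}. (1 - al k) * f k / (real n - real k))" for l f
  note eD = less.prems(2)
  have i1: "1 \<le> i" "i \<le> n" using less.prems by auto
  define w where "w = (\<lambda>j. if j < i then e j else if j \<le> n then e i else 0)"
  define p where "p = (\<lambda>j. if i \<le> j \<and> j \<le> n then e i else (0::real))"
  have e0: "e 0 = 0" using D_out[OF eD, of 0] by simp
  have enn: "\<forall>j\<in>{1..n}. 0 \<le> e j" using eD unfolding dom_D_def by auto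
  have wD: "w \<in> dom_D n"
    unfolding dom_D_def
  proof (intro CollectI conjI ballI allI impI)
    fix j :: nat assume "j \<in> {1..n}" then show "0 \<le> w j" using enn i1 by (auto simp: w_def)
  next
    fix j :: nat assume j: "j \<notin> {1..n}"
    show "w j = 0"
    proof (cases "j = 0")
      case True then show ?thesis using e0 by (simp add: w_def)
    next
      case False then have "n < j" using j by auto
      then show ?thesis using i1 by (simp add: w_def)
    qed
  qed
  have pD: "p \<in> dom_D n" using enn i1 unfolding p_def dom_D_def by auto
  have F1: "R e i = R w i" by (rule UIgen[OF eD wD less.prems(1)]) (use i1 in \<open>auto simp: w_def\<close>)
  have "R p i = R (\<lambda>j. e i * u i j) i"
    by (rule UIgen[OF pD _ less.prems(1)]) (use enn less.prems(1) in \<open>auto simp: p_def u_def dom_D_def\<close>)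
  also have "\<dots> = e i * al i" using scale less.prems(1) enn by blast
  finally have F2: "R p i = e i * al i" .
  have F3: "\<forall>l\<in>{i..n}. R w l - R p l = R w i - R p i"
  proof -
    have cond: "\<forall>j\<in>{i..n}. p j = p i \<and> w j = p i" unfolding p_def w_def by auto
    show ?thesis using DIchain[OF pD wD less.prems(1) cond] by blast
  qed
  have F4: "\<forall>l\<in>{1..<i}. R p l = 0"
  proof
    fix l assume l: "l \<in> {1..<i}"
    then have "R p l = R (\<lambda>_. 0) l"
      using UIgen[OF pD zD, of l] i1 unfolding p_def by auto
    then show "R p l = 0" using zero l i1 by auto
  qed
  have F5: "\<forall>l\<in>{1..<i}. R w l = al l * e l + S l e"
  proof
    fix l assume l: "l \<in> {1..<i}"
    then have "R w l = al l * w l + S l w" using less.IH[of l w] wD i1 unfolding S_def by auto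
    moreover have "S l w = S l e" unfolding S_def using l by (intro sum.cong) (auto simp: w_def)
    ultimately show "R w l = al l * e l + S l e" using l by (simp add: w_def)
  qed
  have F6: "(\<Sum>l\<in>{1..n}. R w l) = (\<Sum>l\<in>{1..n}. w l)" "(\<Sum>l\<in>{1..n}. R p l) = (\<Sum>l\<in>{1..n}. p l)"
    using alloc[OF wD] alloc[OF pD] unfolding is_allocation_def by auto
  have F7: "(\<Sum>l\<in>{1..<i}. w l) = (\<Sum>l\<in>{1..<i}. e l)" "(\<Sum>l\<in>{i..n}. w l) = (\<Sum>l\<in>{i..n}. p l)"
     "(\<Sum>l\<in>{1..<i}. p l) = 0"
    unfolding w_def p_def by (auto intro!: sum.cong sum.neutral)
  define D where "D = R w i - R p i"
  have "(\<Sum>l\<in>{i..n}. R w l) = (\<Sum>l\<in>{i..n}. R p l + D)"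
  proof (rule sum.cong)
    fix l assume "l \<in> {i..n}" then have "R w l - R p l = R w i - R p i" using F3 by blast
    then show "R w l = R p l + D" unfolding D_def by linarith
  qed simp
  also have "\<dots> = (\<Sum>l\<in>{i..n}. R p l) + (real n + 1 - real i) * D"
  proof -
    have c: "real (card {i..n}) = real n + 1 - real i" using i1 by (simp add: of_nat_diff)
    have "(\<Sum>l\<in>{i..n}. R p l + D) = (\<Sum>l\<in>{i..n}. R p l) + (\<Sum>l\<in>{i..n}. D)"
      by (rule sum.distrib)
    also have "(\<Sum>l\<in>{i..n}. D) = real (card {i..n}) * D" by simp
    finally show ?thesis using c by simp
  qed
  finally have G1: "(\<Sum>l\<in>{i..n}. R w l) = (\<Sum>l\<in>{i..n}. R p l) + (real n + 1 - real i) * D" .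
  have G2: "(\<Sum>l\<in>{1..<i}. R w l) = (\<Sum>l\<in>{1..<i}. al l * e l + S l e)"
    using F5 by (intro sum.cong) auto
  have G3: "(\<Sum>l\<in>{1..<i}. R p l) = 0" using F4 by simp
  have H1: "(\<Sum>l\<in>{1..<i}. R w l) + (\<Sum>l\<in>{i..n}. R w l) = (\<Sum>l\<in>{1..<i}. e l) + (\<Sum>l\<in>{i..n}. p l)"
    using F6(1) F7 split_sum[OF i1, of "R w"] split_sum[OF i1, of w] by simp
  have H2: "(\<Sum>l\<in>{i..n}. R p l) = (\<Sum>l\<in>{i..n}. p l)"
    using F6(2) F7 G3 split_sum[OF i1, of "R p"] split_sum[OF i1, of p] by simp
  have "(real n + 1 - real i) * D = (\<Sum>l\<in>{1..<i}. e l) - (\<Sum>l\<in>{1..<i}. al l * e l + S l e)"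
    using H1 H2 G1 G2 by simp
  also have "\<dots> = (real n + 1 - real i) * S i e"
    unfolding S_def by (rule alg[OF i1(2)])
  finally have "D = S i e" using i1 by simp
  then show ?case using F1 F2 unfolding D_def S_def by (simp add: mult.commute)
qed

lemma al_n: "al n = 1"
proof -
  have nD: "n \<in> {1..n}" using n2 by auto
  have a: "is_allocation n (u n) (R (u n))" using alloc uD[OF nD] by blast
  then have s: "(\<Sum>i=1..n. R (u n) i) = (\<Sum>i=1..n. u n i)" unfolding is_allocation_def by auto
  have "\<forall>l\<in>{1..<n}. R (u n) l = 0"
  proof
    fix l assume l: "l \<in> {1..<n}"
    then have "R (u n) l = R (\<lambda>_. 0) l" using UIgen[OF uD[OF nD] zD, of l] unfolding u_def by auto
    then show "R (u n) l = 0" using zero l by auto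
  qed
  then have "(\<Sum>i=1..<n. R (u n) i) = 0" by simp
  moreover have "(\<Sum>i=1..n. u n i) = 1" using nD unfolding u_def by simp
  moreover have "(\<Sum>i=1..n. R (u n) i) = (\<Sum>i=1..<n. R (u n) i) + R (u n) n"
    using split_sum[of n n "R (u n)"] n2 by simp
  ultimately show ?thesis using s unfolding al_def by simp
qed

lemma al_bounds: assumes "k \<in> {1..n-1}" shows "0 \<le> al k \<and> al k \<le> 1"
proof -
  have kD: "k \<in> {1..n}" using assms by auto
  have a: "is_allocation n (u k) (R (u k))" using alloc uD[OF kD] by blast
  then have "0 \<le> R (u k) k" "(\<Sum>i=1..k. R (u k) i) \<le> (\<Sum>i=1..k. u k i)"
    using kD assms unfolding is_allocation_def by auto
  moreover have "\<forall>l\<in>{1..<k}. R (u k) l = 0"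
  proof
    fix l assume l: "l \<in> {1..<k}"
    then have "R (u k) l = R (\<lambda>_. 0) l" using UIgen[OF uD[OF kD] zD, of l] kD unfolding u_def by auto
    then show "R (u k) l = 0" using zero l kD by auto
  qed
  moreover have "(\<Sum>i=1..k. u k i) = 1" using kD unfolding u_def by simp
  moreover have "(\<Sum>i=1..k. R (u k) i) = (\<Sum>i=1..<k. R (u k) i) + R (u k) k"
    using split_sum[of k k "R (u k)"] kD by simp
  ultimately show ?thesis unfolding al_def by simp
qed

end


lemma backward:
  fixes n :: nat and R :: "(nat \<Rightarrow> real) \<Rightarrow> (nat \<Rightarrow> real)" and \<alpha> :: "nat \<Rightarrow> real"
  assumes n2: "2 \<le> n"
    and H: "\<forall>e\<in>dom_D n.
         (\<forall>i\<in>{1..n-1}. R e i = \<alpha> i * e i +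
             (\<Sum>k\<in>{1..<i}. (1 - \<alpha> k) * e k / (real n - real k))) \<and>
         R e n = e n + (\<Sum>k\<in>{1..<n}. (1 - \<alpha> k) * e k / (real n - real k))"
  shows "scale_invariance n R \<and> downstream_impartiality n R \<and> upstream_invariance n R"
proof -
  define \<beta> where "\<beta> i = (if i < n then \<alpha> i else 1)" for i
  have F: "R e i = \<beta> i * e i + (\<Sum>k\<in>{1..<i}. (1 - \<alpha> k) * e k / (real n - real k))"
    if "e \<in> dom_D n" "i \<in> {1..n}" for e i
  proof (cases "i < n")
    case True
    then show ?thesis using H that by (auto simp: \<beta>_def)
  next
    case False
    then have "i = n" using that by auto
    then show ?thesis using H that by (auto simp: \<beta>_def)
  qed
  have diff: "R e' m - R e m = (1 - \<alpha> i) * (e' i - e i) / (real n - real i)"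
    if "e \<in> dom_D n" "e' \<in> dom_D n" "i \<in> {1..n}" "\<forall>j\<in>{1..n}. j \<noteq> i \<longrightarrow> e j = e' j"
       "m \<in> {1..n}" "i < m" for e e' i m
  proof -
    have "R e' m - R e m = (\<Sum>k\<in>{1..<m}. (1 - \<alpha> k) * e' k / (real n - real k)) -
        (\<Sum>k\<in>{1..<m}. (1 - \<alpha> k) * e k / (real n - real k))"
      using F[OF that(1) that(5)] F[OF that(2) that(5)] that(4,5,6) by auto
    also have "\<dots> = (\<Sum>k\<in>{1..<m}. (1 - \<alpha> k) * e' k / (real n - real k) - (1 - \<alpha> k) * e k / (real n - real k))"
      by (simp add: sum_subtractf)
    also have "\<dots> = (\<Sum>k\<in>{1..<m}. if k = i then (1 - \<alpha> i) * (e' i - e i) / (real n - real i) else 0)"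
      using that(3,4,5) by (intro sum.cong) (auto simp: diff_divide_distrib right_diff_distrib)
    also have "\<dots> = (1 - \<alpha> i) * (e' i - e i) / (real n - real i)"
      using that(3,6) by simp
    finally show ?thesis .
  qed
  have SI: "scale_invariance n R"
    unfolding scale_invariance_def
  proof (intro ballI allI impI)
    fix e :: "nat \<Rightarrow> real" and \<gamma> :: real and i
    assume e: "e \<in> dom_D n" and g: "0 \<le> \<gamma>" and i: "i \<in> {1..n}"
    have ge: "(\<lambda>j. \<gamma> * e j) \<in> dom_D n" using e g unfolding dom_D_def by auto
    have "R (\<lambda>j. \<gamma> * e j) i = \<beta> i * (\<gamma> * e i) + (\<Sum>k\<in>{1..<i}. (1 - \<alpha> k) * (\<gamma> * e k) / (real n - real k))"
      using F[OF ge i] by simp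
    also have "\<dots> = \<gamma> * (\<beta> i * e i + (\<Sum>k\<in>{1..<i}. (1 - \<alpha> k) * e k / (real n - real k)))"
      by (simp add: sum_distrib_left distrib_left mult.left_commute mult.commute times_divide_eq_right)
    also have "\<dots> = \<gamma> * R e i" using F[OF e i] by simp
    finally show "R (\<lambda>j. \<gamma> * e j) i = \<gamma> * R e i" .
  qed
  have DI: "downstream_impartiality n R"
    unfolding downstream_impartiality_def
  proof (intro ballI impI allI)
    fix e e' i k l
    assume e: "e \<in> dom_D n" and e': "e' \<in> dom_D n" and i: "i \<in> {1..n}"
      and h: "e i < e' i \<and> (\<forall>j\<in>{1..n}. j \<noteq> i \<longrightarrow> e j = e' j)"
      and k: "k \<in> {1..n}" and l: "l \<in> {1..n}" and kl: "i < k \<and> i < l \<and> e k = e l"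
    show "R e' k - R e k = R e' l - R e l"
      using diff[OF e e' i _ k] diff[OF e e' i _ l] h kl by simp
  qed
  have UI: "upstream_invariance n R"
    unfolding upstream_invariance_def
  proof (intro ballI impI allI)
    fix e e' i k
    assume e: "e \<in> dom_D n" and e': "e' \<in> dom_D n" and i: "i \<in> {1..n}"
      and h: "e i < e' i \<and> (\<forall>j\<in>{1..n}. j \<noteq> i \<longrightarrow> e j = e' j)"
      and k: "k \<in> {1..n}" and ki: "k < i"
    have "(\<Sum>j\<in>{1..<k}. (1 - \<alpha> j) * e j / (real n - real j)) = (\<Sum>j\<in>{1..<k}. (1 - \<alpha> j) * e' j / (real n - real j))"
      using h ki i k by (intro sum.cong) auto
    moreover have "e k = e' k" using h ki k by auto
    ultimately show "R e k = R e' k" using F[OF e k] F[OF e' k] by simp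
  qed
  show ?thesis using SI DI UI by blast
qed

theorem theorem4:
  fixes n :: nat and R :: "(nat \<Rightarrow> real) \<Rightarrow> (nat \<Rightarrow> real)"
  assumes "2 \<le> n" and "is_rule n R"
  shows "(scale_invariance n R \<and> downstream_impartiality n R \<and> upstream_invariance n R) \<longleftrightarrow>
    (\<exists>\<alpha> :: nat \<Rightarrow> real. (\<forall>k\<in>{1..n-1}. 0 \<le> \<alpha> k \<and> \<alpha> k \<le> 1) \<and>
      (\<forall>e\<in>dom_D n.
         (\<forall>i\<in>{1..n-1}. R e i = \<alpha> i * e i +
             (\<Sum>k\<in>{1..<i}. (1 - \<alpha> k) * e k / (real n - real k))) \<and>
         R e n = e n + (\<Sum>k\<in>{1..<n}. (1 - \<alpha> k) * e k / (real n - real k))))"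
proof
  assume A: "scale_invariance n R \<and> downstream_impartiality n R \<and> upstream_invariance n R"
  interpret fw n R using assms A by unfold_locales auto
  show "\<exists>\<alpha> :: nat \<Rightarrow> real. (\<forall>k\<in>{1..n-1}. 0 \<le> \<alpha> k \<and> \<alpha> k \<le> 1) \<and>
      (\<forall>e\<in>dom_D n.
         (\<forall>i\<in>{1..n-1}. R e i = \<alpha> i * e i +
             (\<Sum>k\<in>{1..<i}. (1 - \<alpha> k) * e k / (real n - real k))) \<and>
         R e n = e n + (\<Sum>k\<in>{1..<n}. (1 - \<alpha> k) * e k / (real n - real k)))"
  proof (intro exI[of _ al] conjI ballI)
    fix k assume "k \<in> {1..n-1}" then show "0 \<le> al k" "al k \<le> 1" using al_bounds by auto
  next
    fix e i assume "e \<in> dom_D n" "i \<in> {1..n-1}"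
    then show "R e i = al i * e i + (\<Sum>k\<in>{1..<i}. (1 - al k) * e k / (real n - real k))"
      using M by auto
  next
    fix e assume "e \<in> dom_D n"
    then show "R e n = e n + (\<Sum>k\<in>{1..<n}. (1 - al k) * e k / (real n - real k))"
      using M[of n e] al_n assms(1) by auto
  qed
next
  assume "\<exists>\<alpha> :: nat \<Rightarrow> real. (\<forall>k\<in>{1..n-1}. 0 \<le> \<alpha> k \<and> \<alpha> k \<le> 1) \<and>
      (\<forall>e\<in>dom_D n.
         (\<forall>i\<in>{1..n-1}. R e i = \<alpha> i * e i +
             (\<Sum>k\<in>{1..<i}. (1 - \<alpha> k) * e k / (real n - real k))) \<and>
         R e n = e n + (\<Sum>k\<in>{1..<n}. (1 - \<alpha> k) * e k / (real n - real k)))"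
  then obtain \<alpha> :: "nat \<Rightarrow> real" where
    "\<forall>e\<in>dom_D n.
         (\<forall>i\<in>{1..n-1}. R e i = \<alpha> i * e i +
             (\<Sum>k\<in>{1..<i}. (1 - \<alpha> k) * e k / (real n - real k))) \<and>
         R e n = e n + (\<Sum>k\<in>{1..<n}. (1 - \<alpha> k) * e k / (real n - real k))" by blast
  then show "scale_invariance n R \<and> downstream_impartiality n R \<and> upstream_invariance n R"
    using backward[OF assms(1)] by blast
qed

end
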